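(* Let $n=n(\theta)$ be positive integers with $n\to\infty$ and $\theta/n\to c\in(0,\infty)$ as $\theta\to\infty$. Let $K_n(\theta)$ be a random variable with $P\{K_n(\theta)=k\}=|S_n^k|\theta^k/\theta_{(n)}$, $k=1,\dots,n$, where $\theta_{(n)}=\theta(\theta+1)\cdots(\theta+n-1)$ and $|S_n^k|$ is the coefficient of $\theta^k$ in $\theta_{(n)}$. Then, as $\theta\to\infty$, the family of laws of $K_n(\theta)/n$ satisfies an LDP on $[0,1]$ with speed $\theta$ and rate function $$I(x)=\sup_{t\in\mathbb R}\{tx-\Lambda_3(t)\},$$ where $\Lambda_3(t)=\frac1c\{[c\log c-(1+c)\log(1+c)]+[(1+ce^{ct})\log(1+ce^{ct})-ce^{ct}\log(ce^{ct})]\}$.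
   Context: $K_n(\theta)$ is the number of distinct alleles in a sample of size $n$ from a $PD(\theta)$ population. An LDP with speed $\theta$ uses normalization $\theta^{-1}\log$ as $\theta\to\infty$. *)

theory Defs
  imports "HOL-Analysis.Analysis" "HOL-Combinatorics.Stirling"
begin

text \<open>Law of K_n(theta): P{K = k} = |S_n^k| theta^k / theta_(n), k = 1..n,
  with |S_n^k| the unsigned Stirling numbers of the first kind (library stirling),
  i.e. the coefficient of theta^k in the rising factorial pochhammer theta n.\<close>
definition Kprob :: "real \<Rightarrow> nat \<Rightarrow> nat \<Rightarrow> real" where
  "Kprob \<theta> n k = real (stirling n k) * \<theta> ^ k / pochhammer \<theta> n"

definition Klaw :: "real \<Rightarrow> nat \<Rightarrow> real set \<Rightarrow> real" where
  "Klaw \<theta> n A = (\<Sum>k\<in>{k\<in>{1..n}. real k / real n \<in> A}. Kprob \<theta> n k)"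

definition eln :: "real \<Rightarrow> ereal" where
  "eln p = (if p \<le> 0 then -\<infinity> else ereal (ln p))"

definition Lambda3 :: "real \<Rightarrow> real \<Rightarrow> real" where
  "Lambda3 c t = (1 / c) *
     ((c * ln c - (1 + c) * ln (1 + c)) +
      ((1 + c * exp (c * t)) * ln (1 + c * exp (c * t)) - c * exp (c * t) * ln (c * exp (c * t))))"

definition rateI :: "real \<Rightarrow> real \<Rightarrow> ereal" where
  "rateI c x = (SUP t\<in>(UNIV::real set). ereal (t * x - Lambda3 c t))"

definition LDP_01 :: "(real \<Rightarrow> real set \<Rightarrow> real) \<Rightarrow> (real \<Rightarrow> ereal) \<Rightarrow> bool" where
  "LDP_01 \<mu> I \<longleftrightarrow>
     (\<forall>x\<in>{0..1}. I x \<ge> 0) \<and>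
     (\<forall>a::real. closed {x\<in>{0..1}. I x \<le> ereal a}) \<and>
     (\<forall>F. closed F \<longrightarrow>
        Limsup at_top (\<lambda>\<theta>. ereal (1 / \<theta>) * eln (\<mu> \<theta> F)) \<le> - (INF x\<in>F \<inter> {0..1}. I x)) \<and>
     (\<forall>G. open G \<longrightarrow>
        Liminf at_top (\<lambda>\<theta>. ereal (1 / \<theta>) * eln (\<mu> \<theta> G)) \<ge> - (INF x\<in>G \<inter> {0..1}. I x))"

end

theory Submission
  imports Defs "HOL-Real_Asymp.Real_Asymp"
begin


definition Phi :: "real \<Rightarrow> real" where "Phi x = x * ln x - x"

lemma Phi_deriv: "x > 0 \<Longrightarrow> (Phi has_real_derivative ln x) (at x)"
  unfolding Phi_def
  by (auto intro!: derivative_eq_intros simp: field_simps)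

lemma Phi_bounds:
  assumes x: "x > 0" and h: "h \<ge> 0"
  shows "h * ln x \<le> Phi (x+h) - Phi x" "Phi (x+h) - Phi x \<le> h * ln (x+h)"
proof -
  have "h * ln x \<le> Phi (x+h) - Phi x \<and> Phi (x+h) - Phi x \<le> h * ln (x+h)"
  proof (cases "h = 0")
    case True then show ?thesis by simp
  next
    case False
    then have hp: "h > 0" using h by simp
    obtain z where z: "x < z" "z < x + h" "Phi (x+h) - Phi x = (x + h - x) * ln z"
      using MVT2[of x "x+h" Phi ln] hp x Phi_deriv by force
    have "ln x \<le> ln z" "ln z \<le> ln (x+h)" using z x by auto
    then show ?thesis using z hp by (simp add: mult_left_mono)
  qed
  then show "h * ln x \<le> Phi (x+h) - Phi x" "Phi (x+h) - Phi x \<le> h * ln (x+h)" by auto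
qed

lemma sum_ln_upper:
  assumes d: "d > 0" and N: "N > 0"
  shows "(\<Sum>j<N. ln (d + real j / N)) / N \<le> Phi (d+1) - Phi d"
proof -
  have "(\<Sum>j<N. ln (d + real j / N)) / N = (\<Sum>j<N. (1/N) * ln (d + real j / N))"
    by (simp add: sum_divide_distrib)
  also have "\<dots> \<le> (\<Sum>j<N. Phi (d + real (Suc j) / N) - Phi (d + real j / N))"
  proof (rule sum_mono)
    fix j assume "j \<in> {..<N}"
    have pos: "d + real j / N > 0" using d by (simp add: add_pos_nonneg)
    show "(1/N) * ln (d + real j / N) \<le> Phi (d + real (Suc j) / N) - Phi (d + real j / N)"
      proof -
      have eq: "d + real (Suc j) / N = (d + real j / N) + 1/N" by (simp add: add_divide_distrib)
      show ?thesis using Phi_bounds[OF pos, of "1/N"] unfolding eq by simp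
    qed
  qed
  also have "\<dots> = Phi (d + real N / N) - Phi (d + real 0 / N)"
    by (rule sum_lessThan_telescope)
  finally show ?thesis using N by simp
qed

lemma sum_ln_lower:
  assumes d: "d > 0" and N: "N > 0"
  shows "ln d / N + Phi (d + 1 - 1/N) - Phi d \<le> (\<Sum>j<N. ln (d + real j / N)) / N"
proof -
  obtain M where M: "N = Suc M" using N by (cases N) auto
  have "(\<Sum>j<M. Phi (d + real (Suc j) / N) - Phi (d + real j / N)) \<le> (\<Sum>j<M. (1/N) * ln (d + real (Suc j) / N))"
  proof (rule sum_mono)
    fix j assume "j \<in> {..<M}"
    have pos: "d + real j / N > 0" using d by (simp add: add_pos_nonneg)
    show "Phi (d + real (Suc j) / N) - Phi (d + real j / N) \<le> (1/N) * ln (d + real (Suc j) / N)"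
      proof -
      have eq: "d + real (Suc j) / N = (d + real j / N) + 1/N" by (simp add: add_divide_distrib)
      show ?thesis using Phi_bounds[OF pos, of "1/N"] unfolding eq by simp
    qed
  qed
  moreover have "(\<Sum>j<M. Phi (d + real (Suc j) / N) - Phi (d + real j / N)) = Phi (d + real M / N) - Phi (d + real 0 / N)"
    by (rule sum_lessThan_telescope)
  moreover have "real M / N = 1 - 1/N" using M by (simp add: field_simps)
  moreover have "(\<Sum>j<N. ln (d + real j / N)) / N = ln d / N + (\<Sum>j<M. (1/N) * ln (d + real (Suc j) / N))"
    unfolding M sum.lessThan_Suc_shift by (simp add: sum_divide_distrib add_divide_distrib)
  ultimately show ?thesis by (simp add: add_diff_eq)
qed



lemma lnpoch_eq:
  assumes N: "N > 0" and b: "b > 0"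
  shows "ln (pochhammer b N) / N - ln N = (\<Sum>j<N. ln (b / N + real j / N)) / N"
proof -
  have "ln (pochhammer b N) = (\<Sum>j<N. ln (b + real j))"
    unfolding pochhammer_prod using b
    by (subst ln_prod) (auto simp: lessThan_atLeast0 intro: add_pos_nonneg)
  also have "\<dots> = (\<Sum>j<N. ln N + ln (b / N + real j / N))"
  proof (rule sum.cong)
    fix j assume "j \<in> {..<N}"
    have "b + real j = real N * (b / N + real j / N)" using N by (simp add: field_simps)
    moreover have "b / N + real j / N > 0" using N b by (simp add: add_pos_nonneg)
    ultimately show "ln (b + real j) = ln N + ln (b / N + real j / N)"
      using N by (simp add: ln_mult)
  qed simp
  also have "\<dots> = N * ln N + (\<Sum>j<N. ln (b / N + real j / N))"
    by (simp add: sum.distrib)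
  finally show ?thesis using N by (simp add: field_simps)
qed

lemma lnpoch_limit:
  fixes N :: "'a \<Rightarrow> nat" and b :: "'a \<Rightarrow> real"
  assumes N: "filterlim N at_top F" and bN: "((\<lambda>x. b x / N x) \<longlongrightarrow> d) F" and d: "d > 0"
  shows "((\<lambda>x. ln (pochhammer (b x) (N x)) / N x - ln (N x)) \<longlongrightarrow> Phi (d+1) - Phi d) F"
proof -
  have Nr: "filterlim (\<lambda>x. real (N x)) at_top F"
    using filterlim_compose[OF filterlim_real_sequentially N] by (simp add: o_def)
  have inv0: "((\<lambda>x. inverse (real (N x))) \<longlongrightarrow> 0) F"
    by (rule tendsto_inverse_0_at_top[OF Nr])
  have evN: "eventually (\<lambda>x. N x > 0) F"
    using N by (simp add: filterlim_at_top) (metis (mono_tags, lifting) eventually_mono le_less_trans less_one not_le)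
  have evb: "eventually (\<lambda>x. b x / N x > 0) F"
    using order_tendstoD(1)[OF bN d] .
  have cont: "isCont Phi x" if "x > 0" for x
    unfolding Phi_def using that by (intro continuous_intros) auto
  have lim_up: "((\<lambda>x. Phi (b x / N x + 1) - Phi (b x / N x)) \<longlongrightarrow> Phi (d+1) - Phi d) F"
    by (intro tendsto_intros isCont_tendsto_compose[of _ Phi, OF cont] bN) (use d in auto)
  have lim_lo: "((\<lambda>x. ln (b x / N x) * inverse (real (N x)) + Phi (b x / N x + 1 - inverse (real (N x))) - Phi (b x / N x)) \<longlongrightarrow> ln d * 0 + Phi (d + 1 - 0) - Phi d) F"
    by (intro tendsto_intros isCont_tendsto_compose[of _ Phi, OF cont] bN inv0) (use d in auto)
  show ?thesis
  proof (rule tendsto_sandwich[OF _ _ _ lim_up])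
    show "eventually (\<lambda>x. ln (b x / N x) * inverse (real (N x)) + Phi (b x / N x + 1 - inverse (real (N x))) - Phi (b x / N x)
       \<le> ln (pochhammer (b x) (N x)) / N x - ln (N x)) F"
      using evN evb
    proof eventually_elim
      case (elim x)
      have bp: "b x > 0" using elim by (simp add: zero_less_divide_iff)
      show ?case using sum_ln_lower[OF elim(2) elim(1)] lnpoch_eq[OF elim(1) bp]
        by (simp add: divide_inverse)
    qed
    show "eventually (\<lambda>x. ln (pochhammer (b x) (N x)) / N x - ln (N x) \<le> Phi (b x / N x + 1) - Phi (b x / N x)) F"
      using evN evb
    proof eventually_elim
      case (elim x)
      have bp: "b x > 0" using elim by (simp add: zero_less_divide_iff)
      show ?case using sum_ln_upper[OF elim(2) elim(1)] lnpoch_eq[OF elim(1) bp]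
        by simp
    qed
    show "((\<lambda>x. ln (b x / N x) * inverse (real (N x)) + Phi (b x / N x + 1 - inverse (real (N x))) - Phi (b x / N x)) \<longlongrightarrow> Phi (d+1) - Phi d) F"
      using lim_lo by simp
  qed
qed



definition Q :: "real \<Rightarrow> real" where "Q d = Phi (d+1) - Phi d"

lemma lnpoch_ratio:
  fixes N :: "'a \<Rightarrow> nat" and b r :: "'a \<Rightarrow> real"
  assumes N: "filterlim N at_top F" and bN: "((\<lambda>x. b x / N x) \<longlongrightarrow> d) F" and d: "d > 0"
    and rN: "((\<lambda>x. r x / N x) \<longlongrightarrow> d') F" and d': "d' > 0"
  shows "((\<lambda>x. ln (pochhammer (r x) (N x) / pochhammer (b x) (N x)) / N x) \<longlongrightarrow> Q d' - Q d) F"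
proof -
  have evN: "eventually (\<lambda>x. N x > 0) F"
    using N by (simp add: filterlim_at_top) (metis (mono_tags, lifting) eventually_mono le_less_trans less_one not_le)
  have "((\<lambda>x. (ln (pochhammer (r x) (N x)) / N x - ln (N x)) - (ln (pochhammer (b x) (N x)) / N x - ln (N x))) \<longlongrightarrow> Q d' - Q d) F"
    unfolding Q_def by (intro tendsto_diff lnpoch_limit assms)
  then show ?thesis
  proof (rule tendsto_cong[THEN iffD1, rotated])
    show "eventually (\<lambda>x. (ln (pochhammer (r x) (N x)) / N x - ln (N x)) - (ln (pochhammer (b x) (N x)) / N x - ln (N x)) =
       ln (pochhammer (r x) (N x) / pochhammer (b x) (N x)) / N x) F"
      using evN order_tendstoD(1)[OF bN d] order_tendstoD(1)[OF rN d']
    proof eventually_elim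
      case (elim x)
      have "b x > 0" "r x > 0" using elim by (auto simp: zero_less_divide_iff)
      then have "pochhammer (b x) (N x) > 0" "pochhammer (r x) (N x) > 0" by (auto intro: pochhammer_pos)
      then show ?case by (simp add: ln_div diff_divide_distrib)
    qed
  qed
qed

lemma Kprob_nonneg: "b > 0 \<Longrightarrow> Kprob b N k \<ge> 0"
  unfolding Kprob_def using pochhammer_pos[of b N] by simp

lemma Kprob_exp: "Kprob b N k * exp (s * real k) = real (stirling N k) * (b * exp s) ^ k / pochhammer b N"
  unfolding Kprob_def by (simp add: power_mult_distrib exp_of_nat_mult[symmetric] mult.commute)

lemma Kprob_mgf:
  assumes "b > 0"
  shows "(\<Sum>k\<le>N. Kprob b N k * exp (s * real k)) = pochhammer (b * exp s) N / pochhammer b N"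
  unfolding Kprob_exp by (simp add: sum_divide_distrib[symmetric] stirling_pochhammer)

lemma Kprob_total:
  assumes "b > 0" "N > 0"
  shows "(\<Sum>k\<in>{1..N}. Kprob b N k) = 1"
proof -
  have "(\<Sum>k\<le>N. Kprob b N k * exp (0 * real k)) = 1"
    using Kprob_mgf[OF assms(1), of N 0] pochhammer_pos[OF assms(1), of N] by simp
  moreover have "{..N} = insert 0 {1..N}" by auto
  ultimately show ?thesis using assms by (simp add: Kprob_def)
qed

lemma Kprob_chernoff:
  assumes b: "b > 0" and S: "S \<subseteq> {..N}" and v: "\<And>k. k \<in> S \<Longrightarrow> v \<le> s * real k"
  shows "sum (Kprob b N) S \<le> exp (-v) * (pochhammer (b * exp s) N / pochhammer b N)"
proof -
  have "sum (Kprob b N) S \<le> (\<Sum>k\<in>S. exp (-v) * (Kprob b N k * exp (s * real k)))"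
  proof (rule sum_mono)
    fix k assume k: "k \<in> S"
    have "1 \<le> exp (-v) * exp (s * real k)" using v[OF k] by (simp add: exp_add[symmetric])
    then have "Kprob b N k * 1 \<le> Kprob b N k * (exp (-v) * exp (s * real k))"
      using Kprob_nonneg[OF b] by (intro mult_left_mono) auto
    then show "Kprob b N k \<le> exp (-v) * (Kprob b N k * exp (s * real k))" by (simp add: ac_simps)
  qed
  also have "\<dots> \<le> (\<Sum>k\<le>N. exp (-v) * (Kprob b N k * exp (s * real k)))"
    using S Kprob_nonneg[OF b] by (intro sum_mono2) auto
  also have "\<dots> = exp (-v) * (pochhammer (b * exp s) N / pochhammer b N)"
    by (simp add: sum_distrib_left[symmetric] Kprob_mgf[OF b])
  finally show ?thesis .
qed

lemma Kprob_tilt: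
  assumes b: "b > 0"
  shows "Kprob b N k = Kprob (b * exp s) N k * exp (-(s * real k)) * (pochhammer (b * exp s) N / pochhammer b N)"
proof -
  have "pochhammer (b * exp s) N > 0" using b by (intro pochhammer_pos) auto
  then show ?thesis unfolding Kprob_def
    by (simp add: power_mult_distrib exp_of_nat_mult[symmetric] exp_minus field_simps)
qed



definition f :: "real \<Rightarrow> real" where "f u = u * (ln (u+1) - ln u)"

lemma Lambda3_Q: "c > 0 \<Longrightarrow> Lambda3 c t = (Q (c * exp (c * t)) - Q c) / c"
  unfolding Lambda3_def Q_def Phi_def by (simp add: field_simps add.commute)

lemma Lambda3_0: "c > 0 \<Longrightarrow> Lambda3 c 0 = 0"
  by (simp add: Lambda3_Q)

lemma Q_deriv: "u > 0 \<Longrightarrow> (Q has_real_derivative (ln (u+1) - ln u)) (at u)"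
  unfolding Q_def Phi_def
  by (auto intro!: derivative_eq_intros simp: field_simps)

lemma f_pos: "u > 0 \<Longrightarrow> 0 < f u"
  unfolding f_def by simp

lemma f_less1: assumes "u > 0" shows "f u < 1"
proof -
  have e: "1 + 1/u = (u+1)/u" using assms by (simp add: field_simps)
  have "ln (u+1) - ln u = ln (1 + 1/u)" unfolding e using assms by (simp add: ln_div)
  also have "\<dots> < 1/u" using ln_add_one_self_less_self[of "1/u"] assms by simp
  finally show ?thesis unfolding f_def using assms by (simp add: field_simps)
qed

lemma f_deriv: "u > 0 \<Longrightarrow> (f has_real_derivative (ln (u+1) - ln u - 1/(u+1))) (at u)"
  unfolding f_def
  by (auto intro!: derivative_eq_intros simp: field_simps)

lemma f_deriv_nonneg: fixes u :: real assumes "u > 0" shows "ln (u+1) - ln u - 1/(u+1) \<ge> 0"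
proof -
  have "ln (u/(u+1)) \<le> u/(u+1) - 1" using ln_le_minus_one[of "u/(u+1)"] assms by simp
  moreover have "ln (u/(u+1)) = ln u - ln (u+1)" using assms by (simp add: ln_div)
  moreover have "u/(u+1) - 1 = - (1/(u+1))" using assms by (simp add: field_simps)
  ultimately show ?thesis by simp
qed

lemma f_mono: assumes "0 < u" "u \<le> v" shows "f u \<le> f v"
  using assms
  by (intro DERIV_nonneg_imp_nondecreasing[OF assms(2)])
     (metis f_deriv f_deriv_nonneg order_less_le_trans)

lemma Lambda3_deriv:
  assumes c: "c > 0"
  shows "(Lambda3 c has_real_derivative f (c * exp (c * t))) (at t)"
proof -
  have h1: "((\<lambda>t. c * exp (c * t)) has_real_derivative c * (exp (c * t) * c)) (at t)"
    by (auto intro!: derivative_eq_intros)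
  have h2: "((\<lambda>t. Q (c * exp (c * t))) has_real_derivative (ln (c * exp (c * t) + 1) - ln (c * exp (c * t))) * (c * (exp (c * t) * c))) (at t)"
    using DERIV_chain2[OF Q_deriv h1] c by simp
  have "((\<lambda>t. (Q (c * exp (c * t)) - Q c) / c) has_real_derivative
        ((ln (c * exp (c * t) + 1) - ln (c * exp (c * t))) * (c * (exp (c * t) * c)) - 0) / c) (at t)"
    by (intro DERIV_cdivide DERIV_diff h2 DERIV_const)
  moreover have "((ln (c * exp (c * t) + 1) - ln (c * exp (c * t))) * (c * (exp (c * t) * c)) - 0) / c = f (c * exp (c * t))"
    unfolding f_def using c by simp
  moreover have "Lambda3 c = (\<lambda>t. (Q (c * exp (c * t)) - Q c) / c)" using Lambda3_Q[OF c] by (simp add: fun_eq_iff)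
  ultimately show ?thesis by simp
qed

lemma Lambda3_tangent:
  assumes c: "c > 0"
  shows "t * f c \<le> Lambda3 c t"
proof -
  define g where "g t = Lambda3 c t - t * f c" for t
  have gd: "(g has_real_derivative (f (c * exp (c * s)) - f c)) (at s)" for s
    unfolding g_def by (auto intro!: derivative_eq_intros Lambda3_deriv[OF c])
  have g0: "g 0 = 0" unfolding g_def using Lambda3_0[OF c] by simp
  have "g t \<ge> 0"
  proof (cases "t = 0")
    case True then show ?thesis using g0 by simp
  next
    case False
    show ?thesis
    proof (cases "t > 0")
      case True
      obtain z where z: "0 < z" "z < t" "g t - g 0 = (t - 0) * (f (c * exp (c * z)) - f c)"
        using MVT2[of 0 t g "\<lambda>s. f (c * exp (c * s)) - f c"] True gd by blast
      have "f c \<le> f (c * exp (c * z))" using c z by (intro f_mono) auto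
      then show ?thesis using z True g0 by simp
    next
      case False
      then have tn: "t < 0" using \<open>t \<noteq> 0\<close> by simp
      obtain z where z: "t < z" "z < 0" "g 0 - g t = (0 - t) * (f (c * exp (c * z)) - f c)"
        using MVT2[of t 0 g "\<lambda>s. f (c * exp (c * s)) - f c"] tn gd by blast
      have "c * z \<le> 0" using c z by (simp add: mult_nonneg_nonpos)
      then have "f (c * exp (c * z)) \<le> f c" using c by (intro f_mono) auto
      then have "(0 - t) * (f (c * exp (c * z)) - f c) \<le> 0" using tn by (intro mult_nonneg_nonpos) auto
      then show ?thesis using z g0 by simp
    qed
  qed
  then show ?thesis unfolding g_def by simp
qed

lemma Qexp_deriv:
  assumes d: "d > 0"
  shows "((\<lambda>\<tau>. Q (d * exp \<tau>)) has_real_derivative f d) (at 0)"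
proof -
  have h1: "((\<lambda>t. d * exp t) has_real_derivative d * exp 0) (at 0)"
    by (auto intro!: derivative_eq_intros)
  have "((\<lambda>\<tau>. Q (d * exp \<tau>)) has_real_derivative (ln (d * exp 0 + 1) - ln (d * exp 0)) * (d * exp 0)) (at 0)"
    using DERIV_chain2[OF Q_deriv h1] d by simp
  then show ?thesis unfolding f_def by (simp add: mult.commute)
qed

lemma f_surj:
  assumes y: "0 < y" "y < 1"
  shows "\<exists>u>0. f u = y"
proof -
  have l0: "(f \<longlongrightarrow> 0) (at_right 0)" unfolding f_def by real_asymp
  have l1: "(f \<longlongrightarrow> 1) at_top" unfolding f_def by real_asymp
  obtain u1 where u1: "u1 > 0" "f u1 < y"
  proof -
    have "eventually (\<lambda>u. f u < y \<and> u > 0) (at_right 0)"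
      using eventually_conj[OF order_tendstoD(2)[OF l0 y(1)] eventually_at_right_less] by simp
    then show ?thesis using that eventually_happens' trivial_limit_at_right_real by (metis (mono_tags, lifting))
  qed
  obtain u2 where u2: "u2 \<ge> u1" "f u2 > y"
  proof -
    have "eventually (\<lambda>u. f u > y \<and> u \<ge> u1) at_top"
      using eventually_conj[OF order_tendstoD(1)[OF l1 y(2)] eventually_ge_at_top[of u1]] by simp
    then show ?thesis using that eventually_happens' trivial_limit_at_top_linorder by (metis (mono_tags, lifting))
  qed
  have "continuous_on {u1..u2} f"
    unfolding f_def using u1 by (intro continuous_intros) auto
  then obtain u where "u1 \<le> u" "u \<le> u2" "f u = y"
    using IVT'[of f u1 y u2] u1 u2 by auto
  then show ?thesis using u1 by (intro exI[of _ u]) auto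
qed



lemma sum_cover3:
  fixes g :: "'a \<Rightarrow> real"
  assumes "finite A" "\<And>x. x \<in> A \<Longrightarrow> g x \<ge> 0" "\<And>x. x \<in> A \<Longrightarrow> P x \<or> R x \<or> T x"
  shows "sum g A \<le> sum g {x\<in>A. P x} + sum g {x\<in>A. R x} + sum g {x\<in>A. T x}"
proof -
  have "sum g A \<le> (\<Sum>x\<in>A. (if P x then g x else 0) + (if R x then g x else 0) + (if T x then g x else 0))"
    using assms by (intro sum_mono) auto
  also have "\<dots> = sum g {x\<in>A. P x} + sum g {x\<in>A. R x} + sum g {x\<in>A. T x}"
    using assms(1) by (simp add: sum.distrib sum.inter_filter)
  finally show ?thesis .
qed

lemma sum_cover:
  fixes g :: "'a \<Rightarrow> real"
  assumes "finite A" "finite I" "\<And>x. x \<in> A \<Longrightarrow> g x \<ge> 0" "\<And>x. x \<in> A \<Longrightarrow> \<exists>i\<in>I. P i x"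
  shows "sum g A \<le> (\<Sum>i\<in>I. sum g {x\<in>A. P i x})"
proof -
  have "sum g A \<le> (\<Sum>x\<in>A. \<Sum>i\<in>I. (if P i x then g x else 0))"
  proof (rule sum_mono)
    fix x assume x: "x \<in> A"
    then obtain i where i: "i \<in> I" "P i x" using assms(4) by blast
    have "(if P i x then g x else 0) \<le> (\<Sum>i\<in>I. (if P i x then g x else 0))"
      using assms(2,3) x i by (intro member_le_sum) auto
    then show "g x \<le> (\<Sum>i\<in>I. (if P i x then g x else 0))" using i by simp
  qed
  also have "\<dots> = (\<Sum>i\<in>I. \<Sum>x\<in>A. (if P i x then g x else 0))" by (rule sum.swap)
  also have "\<dots> = (\<Sum>i\<in>I. sum g {x\<in>A. P i x})"
    using assms(1) by (simp add: sum.inter_filter)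
  finally show ?thesis .
qed

lemma deriv_small_steps:
  assumes d: "d > 0" and \<rho>: "\<rho> > 0"
  shows "\<exists>\<tau>>0. Q (d * exp \<tau>) - Q d - \<tau> * (f d + \<rho>) < 0"
    and "\<exists>\<tau><0. Q (d * exp \<tau>) - Q d - \<tau> * (f d - \<rho>) < 0"
proof -
  have "((\<lambda>z. (Q (d * exp z) - Q (d * exp 0)) / (z - 0)) \<longlongrightarrow> f d) (at 0)"
    using Qexp_deriv[OF d] unfolding has_field_derivative_iff .
  then have "eventually (\<lambda>z. dist ((Q (d * exp z) - Q d) / z) (f d) < \<rho>) (at 0)"
    using tendstoD[OF _ \<rho>] by simp
  then obtain e where e: "e > 0" "\<And>z. z \<noteq> 0 \<Longrightarrow> dist z 0 < e \<Longrightarrow> dist ((Q (d * exp z) - Q d) / z) (f d) < \<rho>"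
    unfolding eventually_at by auto
  have 1: "dist ((Q (d * exp (e/2)) - Q d) / (e/2)) (f d) < \<rho>" using e(2)[of "e/2"] e(1) by simp
  have 2: "dist ((Q (d * exp (-e/2)) - Q d) / (-e/2)) (f d) < \<rho>" using e(2)[of "-e/2"] e(1) by simp
  from 1 have "(Q (d * exp (e/2)) - Q d) / (e/2) < f d + \<rho>" by (simp add: dist_real_def abs_less_iff)
  then have "Q (d * exp (e/2)) - Q d < (e/2) * (f d + \<rho>)" using e(1) by (simp add: field_simps)
  then show "\<exists>\<tau>>0. Q (d * exp \<tau>) - Q d - \<tau> * (f d + \<rho>) < 0" using e(1) by (intro exI[of _ "e/2"]) auto
  from 2 have "f d - \<rho> < (Q (d * exp (-e/2)) - Q d) / (-e/2)" by (simp add: dist_real_def abs_less_iff)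
  then have "Q (d * exp (-e/2)) - Q d < (-e/2) * (f d - \<rho>)" using e(1) by (simp add: field_simps)
  then show "\<exists>\<tau><0. Q (d * exp \<tau>) - Q d - \<tau> * (f d - \<rho>) < 0" using e(1) by (intro exI[of _ "-e/2"]) auto
qed

lemma tail_bound:
  fixes N :: "'a \<Rightarrow> nat" and a :: "'a \<Rightarrow> real"
  assumes N: "filterlim N at_top F" and aN: "((\<lambda>x. a x / N x) \<longlongrightarrow> d) F" and d: "d > 0"
    and h: "Q (d * exp \<tau>) - Q d - \<tau> * z < 0"
    and S: "\<And>x. S x \<subseteq> {..N x}" and Sk: "\<And>x k. k \<in> S x \<Longrightarrow> \<tau> * (real (N x) * z) \<le> \<tau> * real k"
    and \<epsilon>: "\<epsilon> > 0"
  shows "eventually (\<lambda>x. sum (Kprob (a x) (N x)) (S x) < \<epsilon>) F"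
proof -
  define h0 where "h0 = Q (d * exp \<tau>) - Q d - \<tau> * z"
  have rN: "((\<lambda>x. a x * exp \<tau> / N x) \<longlongrightarrow> d * exp \<tau>) F"
    using tendsto_mult_right[OF aN, of "exp \<tau>"] by (simp add: field_simps)
  have lim: "((\<lambda>x. ln (pochhammer (a x * exp \<tau>) (N x) / pochhammer (a x) (N x)) / N x) \<longlongrightarrow> Q (d * exp \<tau>) - Q d) F"
    by (rule lnpoch_ratio[OF N aN d rN]) (use d in simp)
  have ev1: "eventually (\<lambda>x. ln (pochhammer (a x * exp \<tau>) (N x) / pochhammer (a x) (N x)) / N x < Q (d * exp \<tau>) - Q d - h0/2) F"
    using order_tendstoD(2)[OF lim] h unfolding h0_def by simp
  have Nr: "filterlim (\<lambda>x. real (N x)) at_top F"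
    using filterlim_compose[OF filterlim_real_sequentially N] by (simp add: o_def)
  have "((\<lambda>x. exp (h0/2 * real (N x))) \<longlongrightarrow> 0) F"
  proof -
    have "filterlim (\<lambda>x. h0/2 * real (N x)) at_bot F"
      using h unfolding h0_def by (intro filterlim_tendsto_neg_mult_at_bot[OF tendsto_const _ Nr]) auto
    then show ?thesis using filterlim_compose[OF exp_at_bot] by blast
  qed
  then have ev2: "eventually (\<lambda>x. exp (h0/2 * real (N x)) < \<epsilon>) F"
    using order_tendstoD(2) \<epsilon> by blast
  have evN: "eventually (\<lambda>x. N x > 0) F"
    using N by (simp add: filterlim_at_top) (metis (mono_tags, lifting) eventually_mono le_less_trans less_one not_le)
  show ?thesis using ev1 ev2 evN order_tendstoD(1)[OF aN d]
  proof eventually_elim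
    case (elim x)
    have ap: "a x > 0" using elim by (auto simp: zero_less_divide_iff)
    define R where "R = pochhammer (a x * exp \<tau>) (N x) / pochhammer (a x) (N x)"
    have Rp: "R > 0" unfolding R_def using ap by (auto intro!: pochhammer_pos divide_pos_pos)
    have "sum (Kprob (a x) (N x)) (S x) \<le> exp (- (\<tau> * (real (N x) * z))) * R"
      unfolding R_def by (rule Kprob_chernoff[OF ap S Sk])
    also have "\<dots> = exp (- (\<tau> * (real (N x) * z)) + ln R)" using Rp by (simp only: exp_add exp_ln)
    also have "\<dots> < exp (h0/2 * real (N x))"
    proof -
      have "ln R / N x < Q (d * exp \<tau>) - Q d - h0/2" using elim(1) unfolding R_def .
      then have "ln R < (Q (d * exp \<tau>) - Q d - h0/2) * N x" using elim(3) by (simp add: field_simps)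
      moreover have "(Q (d * exp \<tau>) - Q d - h0/2) * N x = h0/2 * real (N x) + \<tau> * (real (N x) * z)"
        unfolding h0_def by (simp add: algebra_simps)
      ultimately have "- (\<tau> * (real (N x) * z)) + ln R < h0/2 * real (N x)"
        by linarith
      then show ?thesis by simp
    qed
    finally show ?case using elim(2) by simp
  qed
qed

lemma concentration:
  fixes N :: "'a \<Rightarrow> nat" and a :: "'a \<Rightarrow> real"
  assumes N: "filterlim N at_top F" and aN: "((\<lambda>x. a x / N x) \<longlongrightarrow> d) F" and d: "d > 0" and \<rho>: "\<rho> > 0"
  shows "eventually (\<lambda>x. sum (Kprob (a x) (N x)) {k\<in>{1..N x}. \<bar>real k / N x - f d\<bar> < \<rho>} \<ge> 1/2) F"
proof -
  obtain \<tau>1 where t1: "\<tau>1 > 0" "Q (d * exp \<tau>1) - Q d - \<tau>1 * (f d + \<rho>) < 0"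
    using deriv_small_steps(1)[OF d \<rho>] by blast
  obtain \<tau>2 where t2: "\<tau>2 < 0" "Q (d * exp \<tau>2) - Q d - \<tau>2 * (f d - \<rho>) < 0"
    using deriv_small_steps(2)[OF d \<rho>] by blast
  have evN: "eventually (\<lambda>x. N x > 0) F"
    using N by (simp add: filterlim_at_top) (metis (mono_tags, lifting) eventually_mono le_less_trans less_one not_le)
  have ev1: "eventually (\<lambda>x. sum (Kprob (a x) (N x)) {k\<in>{1..N x}. real k / N x \<ge> f d + \<rho>} < 1/4) F"
  proof (rule tail_bound[OF N aN d t1(2)])
    fix x k assume k: "k \<in> {k\<in>{1..N x}. real k / N x \<ge> f d + \<rho>}"
    then have "N x > 0" by auto
    with k have "real (N x) * (f d + \<rho>) \<le> real k" by (auto simp: field_simps)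
    then show "\<tau>1 * (real (N x) * (f d + \<rho>)) \<le> \<tau>1 * real k" using t1(1) by (intro mult_left_mono) auto
  qed auto
  have ev2: "eventually (\<lambda>x. sum (Kprob (a x) (N x)) {k\<in>{1..N x}. real k / N x \<le> f d - \<rho>} < 1/4) F"
  proof (rule tail_bound[OF N aN d t2(2)])
    fix x k assume k: "k \<in> {k\<in>{1..N x}. real k / N x \<le> f d - \<rho>}"
    then have "N x > 0" by auto
    with k have "real k \<le> real (N x) * (f d - \<rho>)" by (auto simp: field_simps)
    then show "\<tau>2 * (real (N x) * (f d - \<rho>)) \<le> \<tau>2 * real k" using t2(1) by (intro mult_left_mono_neg) auto
  qed auto
  show ?thesis using ev1 ev2 evN order_tendstoD(1)[OF aN d]
  proof eventually_elim
    case (elim x)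
    have ap: "a x > 0" using elim by (auto simp: zero_less_divide_iff)
    have "1 = sum (Kprob (a x) (N x)) {1..N x}" using Kprob_total[OF ap elim(3)] by simp
    also have "\<dots> \<le> sum (Kprob (a x) (N x)) {k\<in>{1..N x}. \<bar>real k / N x - f d\<bar> < \<rho>}
        + sum (Kprob (a x) (N x)) {k\<in>{1..N x}. real k / N x \<ge> f d + \<rho>}
        + sum (Kprob (a x) (N x)) {k\<in>{1..N x}. real k / N x \<le> f d - \<rho>}"
      by (rule sum_cover3) (auto simp: Kprob_nonneg[OF ap])
    finally show ?case using elim(1,2) by simp
  qed
qed




lemma rateI_closed: "closed {x\<in>{0..1}. rateI c x \<le> ereal a}"
proof -
  have "{x\<in>{0..1}. rateI c x \<le> ereal a} = {0..1} \<inter> (\<Inter>t. {x. t * x - Lambda3 c t \<le> a})"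
    unfolding rateI_def by (auto simp: SUP_le_iff)
  moreover have "closed ({0..1::real} \<inter> (\<Inter>t. {x. t * x - Lambda3 c t \<le> a}))"
    by (intro closed_Int closed_INT ballI closed_Collect_le continuous_intros)
  ultimately show ?thesis by simp
qed

lemma rateI_ge: "ereal (t * x - Lambda3 c t) \<le> rateI c x"
  unfolding rateI_def by (rule SUP_upper) auto

lemma rateI_nonneg: "c > 0 \<Longrightarrow> 0 \<le> rateI c x"
  using rateI_ge[of 0 x c] by (simp add: Lambda3_0 zero_ereal_def)

locale ldp_setting =
  fixes n :: "real \<Rightarrow> nat" and c :: real
  assumes npos: "\<And>\<theta>. n \<theta> > 0"
    and nlim: "filterlim n at_top at_top"
    and clim: "((\<lambda>\<theta>. \<theta> / real (n \<theta>)) \<longlongrightarrow> c) at_top"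
    and cpos: "c > 0"
begin

lemma Lambda_lim:
  "((\<lambda>\<theta>. ln (pochhammer (\<theta> * exp (\<theta> / n \<theta> * t)) (n \<theta>) / pochhammer \<theta> (n \<theta>)) / \<theta>) \<longlongrightarrow> Lambda3 c t) at_top"
proof -
  have rN: "((\<lambda>\<theta>. \<theta> * exp (\<theta> / n \<theta> * t) / n \<theta>) \<longlongrightarrow> c * exp (c * t)) at_top"
  proof -
    have "((\<lambda>\<theta>. (\<theta> / n \<theta>) * exp (\<theta> / n \<theta> * t)) \<longlongrightarrow> c * exp (c * t)) at_top"
      by (intro tendsto_intros clim)
    then show ?thesis by (simp add: field_simps)
  qed
  have L1: "((\<lambda>\<theta>. ln (pochhammer (\<theta> * exp (\<theta> / n \<theta> * t)) (n \<theta>) / pochhammer \<theta> (n \<theta>)) / n \<theta>) \<longlongrightarrow> Q (c * exp (c * t)) - Q c) at_top"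
    using lnpoch_ratio[OF nlim clim cpos rN] cpos by simp
  have L2: "((\<lambda>\<theta>. inverse (\<theta> / n \<theta>)) \<longlongrightarrow> inverse c) at_top"
    using tendsto_inverse[OF clim] cpos by simp
  have eq1: "(\<lambda>\<theta>. ln (pochhammer (\<theta> * exp (\<theta> / n \<theta> * t)) (n \<theta>) / pochhammer \<theta> (n \<theta>)) / n \<theta> * inverse (\<theta> / n \<theta>))
     = (\<lambda>\<theta>. ln (pochhammer (\<theta> * exp (\<theta> / n \<theta> * t)) (n \<theta>) / pochhammer \<theta> (n \<theta>)) / \<theta>)"
  proof
    fix \<theta>
    show "ln (pochhammer (\<theta> * exp (\<theta> / n \<theta> * t)) (n \<theta>) / pochhammer \<theta> (n \<theta>)) / n \<theta> * inverse (\<theta> / n \<theta>)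
     = ln (pochhammer (\<theta> * exp (\<theta> / n \<theta> * t)) (n \<theta>) / pochhammer \<theta> (n \<theta>)) / \<theta>"
      using npos[of \<theta>] by (simp add: inverse_divide)
  qed
  have eq2: "(Q (c * exp (c * t)) - Q c) * inverse c = Lambda3 c t"
    using Lambda3_Q[OF cpos] by (simp add: field_simps)
  show ?thesis using tendsto_mult[OF L1 L2] unfolding eq1 eq2 .
qed

end



context ldp_setting
begin

abbreviation M :: "real \<Rightarrow> real \<Rightarrow> real" where
  "M \<theta> t \<equiv> pochhammer (\<theta> * exp (\<theta> / n \<theta> * t)) (n \<theta>) / pochhammer \<theta> (n \<theta>)"

lemma M_pos: "\<theta> > 0 \<Longrightarrow> M \<theta> t > 0"
  by (intro divide_pos_pos pochhammer_pos) auto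

lemma upper_eventually:
  assumes F: "closed F" and L: "ereal L < (INF x\<in>F\<inter>{0..1}. rateI c x)"
  shows "eventually (\<lambda>\<theta>. ereal (1/\<theta>) * eln (Klaw \<theta> (n \<theta>) F) \<le> ereal (-L)) at_top"
proof -
  obtain L' where L': "ereal L < ereal L'" "ereal L' < (INF x\<in>F\<inter>{0..1}. rateI c x)"
    using ereal_dense2[OF L] by blast
  define \<delta> where "\<delta> = L' - L"
  have \<delta>: "\<delta> > 0" using L' unfolding \<delta>_def by simp
  define C where "C = {0..1} \<inter> F"
  have "compact C" unfolding C_def by (intro compact_Int_closed F) auto
  define U where "U t = {y::real. L' < t * y - Lambda3 c t}" for t
  have "C \<subseteq> (\<Union>t\<in>UNIV. U t)"
  proof
    fix x assume x: "x \<in> C"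
    have "ereal L' < rateI c x"
      using L'(2) x unfolding C_def by (meson INF_lower IntI IntD1 IntD2 order_less_le_trans)
    then obtain t where "ereal L' < ereal (t * x - Lambda3 c t)" unfolding rateI_def less_SUP_iff by blast
    then show "x \<in> (\<Union>t\<in>UNIV. U t)" unfolding U_def by auto
  qed
  moreover have "\<And>t. t \<in> UNIV \<Longrightarrow> open (U t)" unfolding U_def
    by (intro open_Collect_less continuous_intros)
  ultimately obtain T where T: "finite T" "C \<subseteq> (\<Union>t\<in>T. U t)"
    using compactE_image[OF \<open>compact C\<close>] by (metis subset_UNIV)
  have ev1: "eventually (\<lambda>\<theta>. \<forall>t\<in>T. ln (M \<theta> t) / \<theta> < Lambda3 c t + \<delta>/3) at_top"
    using \<delta> by (intro eventually_ball_finite T ballI order_tendstoD(2)[OF Lambda_lim]) auto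
  have "((\<lambda>\<theta>. ln (real (card T) + 1) * inverse \<theta>) \<longlongrightarrow> ln (real (card T) + 1) * 0) at_top"
    by (intro tendsto_intros tendsto_inverse_0_at_top filterlim_ident)
  then have ev2: "eventually (\<lambda>\<theta>. ln (real (card T) + 1) * inverse \<theta> < \<delta>/3) at_top"
    using \<delta> by (intro order_tendstoD(2)) auto
  show ?thesis using ev1 ev2 eventually_gt_at_top[of 0]
  proof eventually_elim
    case (elim \<theta>)
    have \<theta>: "\<theta> > 0" using elim by simp
    define S where "S = {k\<in>{1..n \<theta>}. real k / n \<theta> \<in> F}"
    have KS: "Klaw \<theta> (n \<theta>) F = sum (Kprob \<theta> (n \<theta>)) S" unfolding Klaw_def S_def ..
    have "sum (Kprob \<theta> (n \<theta>)) S \<le> (\<Sum>t\<in>T. sum (Kprob \<theta> (n \<theta>)) {k\<in>S. L' < t * (real k / n \<theta>) - Lambda3 c t})"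
    proof (rule sum_cover)
      show "finite S" unfolding S_def by simp
      show "finite T" by fact
      show "\<And>k. k \<in> S \<Longrightarrow> 0 \<le> Kprob \<theta> (n \<theta>) k" using Kprob_nonneg[OF \<theta>] by simp
      fix k assume k: "k \<in> S"
      then have "real k / n \<theta> \<in> C" unfolding S_def C_def by auto
      then show "\<exists>t\<in>T. L' < t * (real k / n \<theta>) - Lambda3 c t" using T(2) unfolding U_def by blast
    qed
    also have "\<dots> \<le> (\<Sum>t\<in>T. exp (\<theta> * (\<delta>/3 - L')))"
    proof (rule sum_mono)
      fix t assume t: "t \<in> T"
      have "sum (Kprob \<theta> (n \<theta>)) {k\<in>S. L' < t * (real k / n \<theta>) - Lambda3 c t}
          \<le> exp (- (\<theta> * (Lambda3 c t + L'))) * M \<theta> t"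
      proof (rule Kprob_chernoff[OF \<theta>])
        show "{k\<in>S. L' < t * (real k / n \<theta>) - Lambda3 c t} \<subseteq> {..n \<theta>}" unfolding S_def by auto
        fix k assume "k \<in> {k\<in>S. L' < t * (real k / n \<theta>) - Lambda3 c t}"
        then have "Lambda3 c t + L' \<le> t * (real k / n \<theta>)" by auto
        then have "\<theta> * (Lambda3 c t + L') \<le> \<theta> * (t * (real k / n \<theta>))" using \<theta> by (intro mult_left_mono) auto
        also have "\<theta> * (t * (real k / n \<theta>)) = \<theta> / n \<theta> * t * real k" by simp
        finally show "\<theta> * (Lambda3 c t + L') \<le> \<theta> / n \<theta> * t * real k" .
      qed
      also have "\<dots> \<le> exp (- (\<theta> * (Lambda3 c t + L'))) * exp (\<theta> * (Lambda3 c t + \<delta>/3))"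
      proof (intro mult_left_mono)
        have "ln (M \<theta> t) < \<theta> * (Lambda3 c t + \<delta>/3)" using elim(1) t \<theta> by (auto simp: field_simps)
        then have "exp (ln (M \<theta> t)) < exp (\<theta> * (Lambda3 c t + \<delta>/3))" by (rule exp_less_mono)
        then show "M \<theta> t \<le> exp (\<theta> * (Lambda3 c t + \<delta>/3))" using M_pos[OF \<theta>, of t] by (simp only: exp_ln less_imp_le)
      qed simp
      also have "\<dots> = exp (\<theta> * (\<delta>/3 - L'))" by (simp add: exp_add[symmetric] algebra_simps)
      finally show "sum (Kprob \<theta> (n \<theta>)) {k\<in>S. L' < t * (real k / n \<theta>) - Lambda3 c t} \<le> exp (\<theta> * (\<delta>/3 - L'))" .
    qed
    also have "\<dots> \<le> (real (card T) + 1) * exp (\<theta> * (\<delta>/3 - L'))" by simp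
    finally have Kle: "Klaw \<theta> (n \<theta>) F \<le> (real (card T) + 1) * exp (\<theta> * (\<delta>/3 - L'))" using KS by simp
    show ?case
    proof (cases "Klaw \<theta> (n \<theta>) F \<le> 0")
      case True then show ?thesis using \<theta> by (simp add: eln_def)
    next
      case False
      then have Kp: "Klaw \<theta> (n \<theta>) F > 0" by simp
      have "ln (Klaw \<theta> (n \<theta>) F) \<le> ln ((real (card T) + 1) * exp (\<theta> * (\<delta>/3 - L')))"
        using Kle Kp by simp
      also have "\<dots> = ln (real (card T) + 1) + \<theta> * (\<delta>/3 - L')" by (simp add: ln_mult)
      finally have "ln (Klaw \<theta> (n \<theta>) F) / \<theta> \<le> ln (real (card T) + 1) * inverse \<theta> + (\<delta>/3 - L')"
        using \<theta> by (simp add: field_simps)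
      also have "\<dots> \<le> -L" using elim(2) \<delta> unfolding \<delta>_def by argo
      finally show ?thesis using Kp \<theta> by (simp add: eln_def)
    qed
  qed
qed

lemma upper_bound:
  assumes F: "closed F"
  shows "Limsup at_top (\<lambda>\<theta>. ereal (1 / \<theta>) * eln (Klaw \<theta> (n \<theta>) F)) \<le> - (INF x\<in>F \<inter> {0..1}. rateI c x)"
proof (rule ccontr)
  let ?X = "Limsup at_top (\<lambda>\<theta>. ereal (1 / \<theta>) * eln (Klaw \<theta> (n \<theta>) F))"
  let ?m = "INF x\<in>F \<inter> {0..1}. rateI c x"
  assume "\<not> ?X \<le> - ?m"
  then have "- ?X < ?m" by (simp add: ereal_uminus_less_reorder not_le)
  then obtain L where L: "- ?X < ereal L" "ereal L < ?m" using ereal_dense2 by blast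
  have "?X \<le> ereal (-L)" by (rule Limsup_bounded[OF upper_eventually[OF F L(2)]])
  then have "- ereal (-L) \<le> - ?X" by (simp only: ereal_minus_le_minus)
  then have "ereal L \<le> - ?X" by simp
  then show False using L(1) by simp
qed

end



context ldp_setting
begin

lemma lower_ball:
  assumes \<rho>: "\<rho> > 0" and \<epsilon>: "\<epsilon> > 0"
  shows "eventually (\<lambda>\<theta>. \<theta> > 0 \<and> sum (Kprob \<theta> (n \<theta>)) {k\<in>{1..n \<theta>}. \<bar>real k / n \<theta> - f (c * exp (c * t))\<bar> < \<rho>} > 0 \<and>
     Lambda3 c t - t * f (c * exp (c * t)) - \<bar>t\<bar> * \<rho> - \<epsilon> \<le> ln (sum (Kprob \<theta> (n \<theta>)) {k\<in>{1..n \<theta>}. \<bar>real k / n \<theta> - f (c * exp (c * t))\<bar> < \<rho>}) / \<theta>) at_top"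
proof -
  define y where "y = f (c * exp (c * t))"
  define d where "d = c * exp (c * t)"
  have d: "d > 0" unfolding d_def using cpos by simp
  have aN: "((\<lambda>\<theta>. \<theta> * exp (\<theta> / n \<theta> * t) / n \<theta>) \<longlongrightarrow> d) at_top"
  proof -
    have "((\<lambda>\<theta>. (\<theta> / n \<theta>) * exp (\<theta> / n \<theta> * t)) \<longlongrightarrow> c * exp (c * t)) at_top"
      by (intro tendsto_intros clim)
    then show ?thesis unfolding d_def by (simp add: field_simps)
  qed
  have ev1: "eventually (\<lambda>\<theta>. sum (Kprob (\<theta> * exp (\<theta> / n \<theta> * t)) (n \<theta>)) {k\<in>{1..n \<theta>}. \<bar>real k / n \<theta> - y\<bar> < \<rho>} \<ge> 1/2) at_top"
    using concentration[OF nlim aN d \<rho>] unfolding y_def d_def by simp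
  have ev2: "eventually (\<lambda>\<theta>. Lambda3 c t - \<epsilon>/2 < ln (M \<theta> t) / \<theta>) at_top"
    using \<epsilon> by (intro order_tendstoD(1)[OF Lambda_lim]) auto
  have inv: "((\<lambda>\<theta>::real. inverse \<theta>) \<longlongrightarrow> 0) at_top"
    by (rule tendsto_inverse_0_at_top[OF filterlim_ident])
  have "((\<lambda>\<theta>. ln (1/2::real) * inverse \<theta>) \<longlongrightarrow> ln (1/2::real) * 0) at_top"
    by (rule tendsto_mult[OF tendsto_const inv])
  then have ev3: "eventually (\<lambda>\<theta>. - \<epsilon>/2 < ln (1/2) * inverse \<theta>) at_top"
    using \<epsilon> by (intro order_tendstoD(1)) auto
  show ?thesis using ev1 ev2 ev3 eventually_gt_at_top[of 0]
  proof eventually_elim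
    case (elim \<theta>)
    have \<theta>: "\<theta> > 0" using elim by simp
    define B where "B = {k\<in>{1..n \<theta>}. \<bar>real k / n \<theta> - y\<bar> < \<rho>}"
    define a where "a = \<theta> * exp (\<theta> / n \<theta> * t)"
    define E where "E = exp (- (\<theta> * (t * y + \<bar>t\<bar> * \<rho>)))"
    have Mp: "M \<theta> t > 0" by (rule M_pos[OF \<theta>])
    have "sum (Kprob \<theta> (n \<theta>)) B = (\<Sum>k\<in>B. Kprob a (n \<theta>) k * exp (- (\<theta> / n \<theta> * t * real k)) * M \<theta> t)"
      unfolding a_def by (intro sum.cong refl Kprob_tilt[OF \<theta>])
    also have "\<dots> \<ge> (\<Sum>k\<in>B. Kprob a (n \<theta>) k * E * M \<theta> t)"
    proof (rule sum_mono)
      fix k assume k: "k \<in> B"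
      have "t * (real k / n \<theta>) - t * y = t * (real k / n \<theta> - y)" by (simp add: algebra_simps)
      also have "\<dots> \<le> \<bar>t\<bar> * \<bar>real k / n \<theta> - y\<bar>" by (metis abs_ge_self abs_mult)
      also have "\<dots> \<le> \<bar>t\<bar> * \<rho>" using k unfolding B_def by (intro mult_left_mono) auto
      finally have "t * (real k / n \<theta>) \<le> t * y + \<bar>t\<bar> * \<rho>" by simp
      then have "\<theta> * (t * (real k / n \<theta>)) \<le> \<theta> * (t * y + \<bar>t\<bar> * \<rho>)" using \<theta> by (intro mult_left_mono) auto
      moreover have "\<theta> / n \<theta> * t * real k = \<theta> * (t * (real k / n \<theta>))" by simp
      ultimately have "E \<le> exp (- (\<theta> / n \<theta> * t * real k))" unfolding E_def by simp
      moreover have "a > 0" unfolding a_def using \<theta> by simp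
      ultimately show "Kprob a (n \<theta>) k * E * M \<theta> t \<le> Kprob a (n \<theta>) k * exp (- (\<theta> / n \<theta> * t * real k)) * M \<theta> t"
        using Mp Kprob_nonneg by (intro mult_right_mono mult_left_mono) auto
    qed
    also have "(\<Sum>k\<in>B. Kprob a (n \<theta>) k * E * M \<theta> t) = (\<Sum>k\<in>B. Kprob a (n \<theta>) k) * (E * M \<theta> t)"
      by (simp only: mult.assoc sum_distrib_right)
    finally have s1: "sum (Kprob \<theta> (n \<theta>)) B \<ge> E * M \<theta> t * sum (Kprob a (n \<theta>)) B"
      by (simp only: mult.commute)
    have "sum (Kprob a (n \<theta>)) B \<ge> 1/2" using elim(1) unfolding B_def a_def by simp
    moreover have EM: "E * M \<theta> t > 0" unfolding E_def using Mp by (intro mult_pos_pos) auto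
    ultimately have s2: "sum (Kprob \<theta> (n \<theta>)) B \<ge> E * M \<theta> t * (1/2)"
      using s1 by (meson mult_left_mono less_imp_le order_trans)
    have EM2: "E * M \<theta> t * (1/2) > 0" by (rule mult_pos_pos[OF EM]) simp
    have pos: "sum (Kprob \<theta> (n \<theta>)) B > 0" using s2 EM2 by linarith
    have "ln (E * M \<theta> t * (1/2)) \<le> ln (sum (Kprob \<theta> (n \<theta>)) B)"
      using s2 EM2 by simp
    moreover have "ln (E * M \<theta> t * (1/2)) = - (\<theta> * (t * y + \<bar>t\<bar> * \<rho>)) + ln (M \<theta> t) + ln (1/2)"
    proof -
      have lm: "\<And>x y::real. x > 0 \<Longrightarrow> y > 0 \<Longrightarrow> ln (x * y * (1/2)) = ln x + ln y + ln (1/2)"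
        by (simp only: ln_mult mult_pos_pos) (auto intro: mult_pos_pos)
      have "E > 0" unfolding E_def by simp
      from lm[OF this Mp] show ?thesis unfolding E_def by (simp only: ln_exp)
    qed
    ultimately have "(- (\<theta> * (t * y + \<bar>t\<bar> * \<rho>)) + ln (M \<theta> t) + ln (1/2)) / \<theta> \<le> ln (sum (Kprob \<theta> (n \<theta>)) B) / \<theta>"
      using \<theta> by (simp add: divide_right_mono)
    moreover have "(- (\<theta> * (t * y + \<bar>t\<bar> * \<rho>)) + ln (M \<theta> t) + ln (1/2)) / \<theta> = - (t * y + \<bar>t\<bar> * \<rho>) + ln (M \<theta> t) / \<theta> + ln (1/2) * inverse \<theta>"
      using \<theta> by (simp add: field_simps)
    ultimately have "Lambda3 c t - t * y - \<bar>t\<bar> * \<rho> - \<epsilon> \<le> ln (sum (Kprob \<theta> (n \<theta>)) B) / \<theta>"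
      using elim(2,3) by argo
    then show ?case using \<theta> pos unfolding B_def y_def by simp
  qed
qed

end



context ldp_setting
begin

lemma lower_point:
  fixes G :: "real set" and x :: real
  assumes G: "open G" and x: "x \<in> G \<inter> {0..1}"
  shows "- rateI c x \<le> Liminf at_top (\<lambda>\<theta>. ereal (1 / \<theta>) * eln (Klaw \<theta> (n \<theta>) G))"
proof (cases "rateI c x = \<infinity>")
  case True then show ?thesis by simp
next
  case False
  have "0 \<le> rateI c x" by (rule rateI_nonneg[OF cpos])
  with False obtain r where r: "rateI c x = ereal r" "r \<ge> 0"
    by (cases "rateI c x") auto
  define y0 where "y0 = f c"
  have y0: "0 < y0" "y0 < 1" unfolding y0_def using cpos f_pos f_less1 by auto
  obtain e where e: "e > 0" "ball x e \<subseteq> G" using G x open_contains_ball by blast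
  define l where "l = min 1 (e / (2 * (\<bar>y0 - x\<bar> + 1)))"
  have "0 < e / (2 * (\<bar>y0 - x\<bar> + 1))" using e by (intro divide_pos_pos mult_pos_pos add_nonneg_pos) auto
  then have l: "0 < l" "l \<le> 1" unfolding l_def by auto
  define y where "y = (1 - l) * x + l * y0"
  have "y - x = l * (y0 - x)" unfolding y_def by (simp add: algebra_simps)
  then have "dist y x = l * \<bar>y0 - x\<bar>" unfolding dist_real_def using l
    by (simp add: abs_mult)
  also have "\<dots> \<le> e / (2 * (\<bar>y0 - x\<bar> + 1)) * \<bar>y0 - x\<bar>" unfolding l_def by (intro mult_right_mono) auto
  also have "\<dots> < e"
  proof -
    have eq: "e / (2 * (\<bar>y0 - x\<bar> + 1)) * \<bar>y0 - x\<bar> = e * (\<bar>y0 - x\<bar> / (2 * (\<bar>y0 - x\<bar> + 1)))" by simp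
    have dpos: "0 < 2 * (\<bar>y0 - x\<bar> + 1)" by (simp add: add_nonneg_pos)
    have "\<bar>y0 - x\<bar> < 2 * (\<bar>y0 - x\<bar> + 1)" using abs_ge_zero[of "y0 - x"] by argo
    then have "\<bar>y0 - x\<bar> / (2 * (\<bar>y0 - x\<bar> + 1)) < 1" using dpos by (simp only: divide_less_eq_1_pos)
    then have "e * (\<bar>y0 - x\<bar> / (2 * (\<bar>y0 - x\<bar> + 1))) < e * 1" using e(1) by (intro mult_strict_left_mono) auto
    then show ?thesis unfolding eq by simp
  qed
  finally have yG: "y \<in> G" using e(2) by (auto simp: dist_commute)
  have y01: "0 < y" "y < 1"
  proof -
    have "0 \<le> (1 - l) * x" using x l by auto
    moreover have "0 < l * y0" using l y0 by auto
    ultimately show "0 < y" unfolding y_def by linarith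
    have "(1 - l) * x \<le> (1 - l)" using x l by (intro mult_left_le) auto
    moreover have "l * y0 < l" using l y0 by auto
    ultimately show "y < 1" unfolding y_def by linarith
  qed
  have Iy: "rateI c y \<le> ereal r"
    unfolding rateI_def
  proof (rule SUP_least)
    fix t :: real
    have "ereal (t * x - Lambda3 c t) \<le> ereal r" using rateI_ge[of t x c] r by simp
    then have 1: "t * x - Lambda3 c t \<le> r" by simp
    have 2: "t * y0 - Lambda3 c t \<le> 0" using Lambda3_tangent[OF cpos, of t] unfolding y0_def by simp
    have "t * y - Lambda3 c t = (1 - l) * (t * x - Lambda3 c t) + l * (t * y0 - Lambda3 c t)"
      unfolding y_def by (simp add: algebra_simps)
    also have "\<dots> \<le> (1 - l) * r + l * 0"
      using 1 2 l by (intro add_mono mult_left_mono) auto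
    also have "\<dots> \<le> r" using l r by (simp add: mult_left_le_one_le)
    finally show "ereal (t * y - Lambda3 c t) \<le> ereal r" by simp
  qed
  obtain u where u: "u > 0" "f u = y" using f_surj[OF y01] by blast
  define t where "t = ln (u / c) / c"
  have ct: "c * exp (c * t) = u" unfolding t_def using cpos u by simp
  have J: "t * y - Lambda3 c t \<le> r" using order_trans[OF rateI_ge[of t y c] Iy] by simp
  show ?thesis
  proof (rule dense_le)
    fix z assume z: "z < - rateI c x"
    show "z \<le> Liminf at_top (\<lambda>\<theta>. ereal (1 / \<theta>) * eln (Klaw \<theta> (n \<theta>) G))"
    proof (cases z)
      case MInf then show ?thesis by simp
    next
      case PInf then show ?thesis using z r by simp
    next
      case (real w)
      have w: "w < - r" using z r real by simp
      define \<delta> where "\<delta> = - r - w"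
      have \<delta>: "\<delta> > 0" unfolding \<delta>_def using w by simp
      obtain \<rho>0 where \<rho>0: "\<rho>0 > 0" "ball y \<rho>0 \<subseteq> G" using G yG open_contains_ball by blast
      define \<rho> where "\<rho> = min \<rho>0 (\<delta> / (2 * (\<bar>t\<bar> + 1)))"
      have \<rho>: "\<rho> > 0" unfolding \<rho>_def using \<rho>0 \<delta> by auto
      have t\<rho>: "\<bar>t\<bar> * \<rho> \<le> \<delta> / 2"
      proof -
        have "\<rho> * (2 * (\<bar>t\<bar> + 1)) \<le> \<delta>" unfolding \<rho>_def
          by (metis abs_ge_zero add_nonneg_pos dual_order.refl min.cobounded2 mult_pos_pos nonzero_eq_divide_eq
              order.strict_iff_not pos_le_divide_eq zero_less_numeral zero_less_one)
        moreover have "\<bar>t\<bar> * \<rho> \<le> (\<bar>t\<bar> + 1) * \<rho>" using \<rho> by (intro mult_right_mono) auto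
        ultimately show ?thesis by (simp add: algebra_simps)
      qed
      have "eventually (\<lambda>\<theta>. ereal w \<le> ereal (1 / \<theta>) * eln (Klaw \<theta> (n \<theta>) G)) at_top"
        using lower_ball[OF \<rho> half_gt_zero[OF \<delta>], of t]
      proof (rule eventually_mono)
        fix \<theta>
        let ?B = "{k\<in>{1..n \<theta>}. \<bar>real k / n \<theta> - f (c * exp (c * t))\<bar> < \<rho>}"
        assume H: "\<theta> > 0 \<and> sum (Kprob \<theta> (n \<theta>)) ?B > 0 \<and>
           Lambda3 c t - t * f (c * exp (c * t)) - \<bar>t\<bar> * \<rho> - \<delta>/2 \<le> ln (sum (Kprob \<theta> (n \<theta>)) ?B) / \<theta>"
        then have \<theta>: "\<theta> > 0" by simp
        have sub: "?B \<subseteq> {k\<in>{1..n \<theta>}. real k / n \<theta> \<in> G}"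
        proof
          fix k assume "k \<in> ?B"
          then have "real k / n \<theta> \<in> ball y \<rho>0" "k \<in> {1..n \<theta>}"
            using ct u \<rho>_def by (auto simp: dist_real_def abs_minus_commute)
          then show "k \<in> {k\<in>{1..n \<theta>}. real k / n \<theta> \<in> G}" using \<rho>0 by auto
        qed
        have "sum (Kprob \<theta> (n \<theta>)) ?B \<le> Klaw \<theta> (n \<theta>) G"
          unfolding Klaw_def using sub Kprob_nonneg[OF \<theta>] by (intro sum_mono2) auto
        then have Kp: "Klaw \<theta> (n \<theta>) G > 0" and "ln (sum (Kprob \<theta> (n \<theta>)) ?B) \<le> ln (Klaw \<theta> (n \<theta>) G)"
          using H by auto
        then have "ln (sum (Kprob \<theta> (n \<theta>)) ?B) / \<theta> \<le> ln (Klaw \<theta> (n \<theta>) G) / \<theta>"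
          using \<theta> by (simp add: divide_right_mono)
        moreover have "w \<le> Lambda3 c t - t * y - \<bar>t\<bar> * \<rho> - \<delta>/2"
          using J t\<rho> unfolding \<delta>_def by argo
        ultimately have "w \<le> ln (Klaw \<theta> (n \<theta>) G) / \<theta>" using H ct u by simp
        then show "ereal w \<le> ereal (1 / \<theta>) * eln (Klaw \<theta> (n \<theta>) G)"
          using Kp by (simp add: eln_def)
      qed
      then show ?thesis unfolding real by (rule Liminf_bounded)
    qed
  qed
qed

lemma lower_bound:
  assumes G: "open G"
  shows "- (INF x\<in>G \<inter> {0..1}. rateI c x) \<le> Liminf at_top (\<lambda>\<theta>. ereal (1 / \<theta>) * eln (Klaw \<theta> (n \<theta>) G))"
proof -
  have "- Liminf at_top (\<lambda>\<theta>. ereal (1 / \<theta>) * eln (Klaw \<theta> (n \<theta>) G)) \<le> (INF x\<in>G \<inter> {0..1}. rateI c x)"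
  proof (rule INF_greatest)
    fix x assume "x \<in> G \<inter> {0..1}"
    from lower_point[OF G this] show "- Liminf at_top (\<lambda>\<theta>. ereal (1 / \<theta>) * eln (Klaw \<theta> (n \<theta>) G)) \<le> rateI c x"
      by (simp add: ereal_uminus_le_reorder)
  qed
  then show ?thesis by (simp add: ereal_uminus_le_reorder)
qed

lemma LDP: "LDP_01 (\<lambda>\<theta>. Klaw \<theta> (n \<theta>)) (rateI c)"
  unfolding LDP_01_def
  using rateI_nonneg[OF cpos] rateI_closed upper_bound lower_bound by auto

end

theorem theorem4p4:
  fixes n :: "real \<Rightarrow> nat" and c :: real
  assumes "\<And>\<theta>. n \<theta> > 0"
    and "filterlim n at_top at_top"
    and "((\<lambda>\<theta>. \<theta> / real (n \<theta>)) \<longlongrightarrow> c) at_top"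
    and "c > 0"
  shows "LDP_01 (\<lambda>\<theta>. Klaw \<theta> (n \<theta>)) (rateI c)"
proof -
  interpret ldp_setting n c by (rule ldp_setting.intro) (use assms in auto)
  show ?thesis by (rule LDP)
qed

end
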